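(* Let $\mathcal{C}=\mathcal{I}_i$ be an irreducible $\lambda$-constacyclic code of length $n$ and dimension $k$ over $\mathbb{F}_q$ corresponding to the $q$-cyclotomic coset $C_{1+t\alpha_i}$ (so $k=d_i$). Then $$N_{\langle\rho,M\rangle}(\mathcal{C}^{*})=\frac{(q^k-1)\gcd\big((q-1)(1+t\alpha_i),\,tn\big)}{(q-1)tn}.$$ Moreover, the number of distinct nonzero Hamming weights of $\mathcal{C}$ is at most $N_{\langle\rho,M\rangle}(\mathcal{C}^{*})$, with equality if and only if for any two nonzero codewords $c_1,c_2\in\mathcal{C}$ of the same Hamming weight there exist an integer $j$ and $b\in\mathbb{F}_q^{*}$ with $\rho^{j}(bc_1)=c_2$.
   Context: Standing setup: $q$ is a prime power, $n$ a positive integer with $\gcd(n,q)=1$, $\lambda\in\mathbb{F}_q^{*}$ has multiplicative order $t$ (so $t\mid q-1$). $\mathcal{R}=\mathbb{F}_q[x]/\langle x^n-\lambda\rangle$; vectors in $\mathbb{F}_q^n$ are identified with polynomials of degree $<n$, and a $\lambda$-constacyclic code of length $n$ is an ideal of $\mathcal{R}$. Let $\zeta$ be a primitive $tn$-th root of unity in an extension $\mathbb{F}_{q^m}$ with $\zeta^n=\lambda$. The set $\mathcal{S}=\{1+ti:0\le i\le n-1\}$ (residues mod $tn$) is partitioned into the distinct $q$-cyclotomic cosets modulo $tn$, $C_{1+t\alpha_j}=\{(1+t\alpha_j)q^{h}\bmod tn: h\ge 0\}$, $j=0,\dots,s$, with $0=\alpha_0<\dots<\alpha_s\le n-1$ and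 $d_j=|C_{1+t\alpha_j}|$. Let $m_j(x)=\prod_{h\in C_{1+t\alpha_j}}(x-\zeta^{h})$, and let $\mathcal{I}_j$ be the ideal of $\mathcal{R}$ generated by $(x^n-\lambda)/m_j(x)$ (the irreducible $\lambda$-constacyclic code of dimension $d_j$ corresponding to $C_{1+t\alpha_j}$). The cyclic shift $\rho$ is $\rho(c(x))=xc(x)$ in $\mathcal{R}$, i.e. $(c_0,\dots,c_{n-1})\mapsto(\lambda c_{n-1},c_0,\dots,c_{n-2})$; $\langle\rho\rangle$ has order $tn$. For $b\in\mathbb{F}_q^{*}$, $\sigma_b(c)=bc$ (scalar multiplication), $M=\{\sigma_b:b\in\mathbb{F}_q^{*}\}$, and $\langle\rho,M\rangle$ is the group of $\mathbb{F}_q$-linear maps generated by $\rho$ and $M$ (it equals $\langle\rho\rangle\times M$, of order $tn(q-1)$). $\mathcal{C}^{*}=\mathcal{C}\setminus\{0\}$, and $N_G(X)$ is the number of orbits of a group $G$ acting on $X$. *)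

theory Defs
  imports "HOL-Computational_Algebra.Polynomial"
begin

text \<open>Codewords of length n are identified with polynomials of degree < n.
  The ring R = F_q[x]/(x^n - lambda) is represented by remainders modulo x^n - lambda.\<close>

definition xn_minus :: "nat \<Rightarrow> 'a::field \<Rightarrow> 'a poly" where
  "xn_minus n lam = monom 1 n - [:lam:]"

definition cshift :: "nat \<Rightarrow> 'a::field \<Rightarrow> 'a poly \<Rightarrow> 'a poly" where
  "cshift n lam c = (monom 1 1 * c) mod xn_minus n lam"

definition hweight :: "'a::zero poly \<Rightarrow> nat" where
  "hweight c = card {i. coeff c i \<noteq> 0}"

definition cyc_coset :: "nat \<Rightarrow> nat \<Rightarrow> nat \<Rightarrow> nat set" where
  "cyc_coset q N a = {(a * q ^ h) mod N | h. True}"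

definition coset_poly :: "'b::field \<Rightarrow> nat set \<Rightarrow> 'b poly" where
  "coset_poly \<zeta> C = (\<Prod>h\<in>C. [:- (\<zeta> ^ h), 1:])"

text \<open>The irreducible constacyclic code: the ideal of R generated by (x^n - lambda)/m(x).\<close>
definition irr_code ::
  "('a::field \<Rightarrow> 'b::field) \<Rightarrow> nat \<Rightarrow> 'a \<Rightarrow> 'b \<Rightarrow> nat set \<Rightarrow> 'a poly set" where
  "irr_code emb n lam \<zeta> C =
     {c. \<exists>a :: 'a poly. map_poly emb c =
        (map_poly emb a * (map_poly emb (xn_minus n lam) div coset_poly \<zeta> C))
          mod map_poly emb (xn_minus n lam)}"

definition rhoM_orbit :: "nat \<Rightarrow> 'a::field \<Rightarrow> 'a poly \<Rightarrow> 'a poly set" where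
  "rhoM_orbit n lam c = {(cshift n lam ^^ j) (smult b c) | j b. b \<noteq> 0}"

definition num_orbits :: "nat \<Rightarrow> 'a::field \<Rightarrow> 'a poly set \<Rightarrow> nat" where
  "num_orbits n lam X = card (rhoM_orbit n lam ` X)"

end

theory Submission
  imports "Berlekamp_Zassenhaus.Finite_Field" Defs
begin


definition addsg :: "'a::ring_1 set \<Rightarrow> bool" where
  "addsg V \<longleftrightarrow> 0 \<in> V \<and> (\<forall>x\<in>V. \<forall>y\<in>V. x + y \<in> V) \<and> (\<forall>x\<in>V. - x \<in> V)"

lemma addsg_of_nat_mult:
  assumes "addsg V" "w \<in> V" shows "of_nat u * w \<in> V"
  using assms by (induction u) (auto simp: addsg_def distrib_right)

lemma card_finite_field_prime_power:
  shows "\<exists>r. card (UNIV :: 'a::{finite,field} set) = CHAR('a) ^ r"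
proof -
  define p where "p = CHAR('a)"
  have p_pos: "p > 0" unfolding p_def by (rule finite_imp_CHAR_pos) simp
  have p_prime: "prime p" unfolding p_def by (rule prime_CHAR_semidom) (use p_pos p_def in simp)
  have px: "of_nat p * (x::'a) = 0" for x by (simp add: p_def)
  have main: "\<forall>V::'a set. addsg V \<longrightarrow> card (- V) = d \<longrightarrow> (\<exists>s. card (UNIV::'a set) = p ^ s * card V)" for d
  proof (induction d rule: less_induct)
    case (less d)
    show ?case
    proof (intro allI impI)
      fix V :: "'a set" assume sg: "addsg V" and cd: "card (- V) = d"
      show "\<exists>s. card (UNIV::'a set) = p ^ s * card V"
      proof (cases "V = UNIV")
        case True then show ?thesis by (intro exI[of _ 0]) simp
      next
        case False
        then obtain x where xV: "x \<notin> V" by blast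
        define V' where "V' = (\<lambda>(v,j). v + of_nat j * x) ` (V \<times> {..<p})"
        have inj: "inj_on (\<lambda>(v,j). v + of_nat j * x) (V \<times> {..<p})"
        proof (rule inj_onI, clarify)
          fix v1 j1 v2 j2 assume v1: "v1 \<in> V" and j1: "j1 < p" and v2: "v2 \<in> V" and j2: "j2 < p"
            and eq: "v1 + of_nat j1 * x = v2 + of_nat j2 * x"
          have jj: "j1 = j2"
          proof (rule ccontr)
            assume ne: "j1 \<noteq> j2"
            have gen: "j2 < j1 \<Longrightarrow> v1 \<in> V \<Longrightarrow> v2 \<in> V \<Longrightarrow> j1 < p \<Longrightarrow>
               v1 + of_nat j1 * x = v2 + of_nat j2 * x \<Longrightarrow> False" for j1 j2 v1 v2
            proof -
              assume lt: "j2 < j1" and v1: "v1 \<in> V" and v2: "v2 \<in> V" and j1: "j1 < p"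
                and eq: "v1 + of_nat j1 * x = v2 + of_nat j2 * x"
              define dd where "dd = j1 - j2"
              have dpos: "0 < dd" "dd < p" using lt j1 by (auto simp: dd_def)
              have "of_nat dd * x = v2 - v1"
                using eq lt by (simp add: dd_def of_nat_diff algebra_simps)
              also have "\<dots> \<in> V" using sg v1 v2 unfolding addsg_def
                by (metis diff_conv_add_uminus)
              finally have dV: "of_nat dd * x \<in> V" .
              have "coprime dd p" using p_prime dpos
                by (metis coprime_commute nat_dvd_not_less prime_imp_coprime_nat)
              then have eu: "[dd ^ totient p = 1] (mod p)" by (rule euler_theorem)
              have tp: "totient p > 0" using p_pos by simp
              define u where "u = dd ^ (totient p - 1)"
              have u: "[dd * u = 1] (mod p)" using eu tp unfolding u_def
                by (metis Suc_diff_1 power_Suc)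
              have "of_nat (dd * u) = (of_nat 1 :: 'a)"
              proof -
                have "of_nat ((dd*u) mod p) = (of_nat (dd*u) :: 'a)" unfolding p_def by simp
                moreover have "of_nat (1 mod p) = (of_nat 1 :: 'a)" unfolding p_def by simp
                ultimately show ?thesis using u unfolding cong_def by metis
              qed
              hence "of_nat u * (of_nat dd * x) = x"
                by (metis mult.assoc mult.commute mult_1 of_nat_1 of_nat_mult)
              moreover have "of_nat u * (of_nat dd * x) \<in> V" by (rule addsg_of_nat_mult[OF sg dV])
              ultimately show False using xV by metis
            qed
            show False
            proof (cases "j2 < j1")
              case True then show ?thesis using gen[OF True v1 v2 j1 eq] by simp
            next
              case False then have "j1 < j2" using ne by simp
              then show ?thesis using gen[of j1 j2 v2 v1] v1 v2 j2 eq by simp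
            qed
          qed
          then show "v1 = v2 \<and> j1 = j2" using eq by simp
        qed
        have memV': "v + of_nat j * x \<in> V'" if "v \<in> V" "j < p" for v j
          unfolding V'_def by (rule image_eqI[of _ _ "(v,j)"]) (use that in auto)
        have cV': "card V' = p * card V"
          unfolding V'_def by (simp add: card_image[OF inj] card_cartesian_product)
        have sg': "addsg V'"
          unfolding addsg_def
        proof (intro conjI ballI)
          show "0 \<in> V'" using memV'[of 0 0] sg p_pos by (simp add: addsg_def)
        next
          fix a b assume "a \<in> V'" "b \<in> V'"
          then obtain v1 j1 v2 j2 where a: "a = v1 + of_nat j1 * x" "v1 \<in> V" "j1 < p"
            and b: "b = v2 + of_nat j2 * x" "v2 \<in> V" "j2 < p" unfolding V'_def by auto
          have vv: "v1 + v2 \<in> V" using sg a b by (auto simp: addsg_def)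
          show "a + b \<in> V'"
          proof (cases "j1 + j2 < p")
            case True
            then show ?thesis using memV'[OF vv True] a b by (simp add: algebra_simps)
          next
            case False
            have eqab: "a + b = (v1 + v2) + of_nat (j1 + j2 - p) * x"
              using False a b px[of x] by (simp add: of_nat_diff algebra_simps)
            have "j1 + j2 - p < p" using a(3) b(3) by simp
            then show ?thesis unfolding eqab by (rule memV'[OF vv])
          qed
        next
          fix a assume "a \<in> V'"
          then obtain v j where a: "a = v + of_nat j * x" "v \<in> V" "j < p" unfolding V'_def by auto
          have nv: "- v \<in> V" using sg a by (auto simp: addsg_def)
          show "- a \<in> V'"
          proof (cases "j = 0")
            case True then show ?thesis using memV'[OF nv, of 0] a p_pos by simp
          next
            case False
            have eqa: "- a = (- v) + of_nat (p - j) * x"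
              using a px[of x] by (simp add: of_nat_diff algebra_simps)
            have "p - j < p" using a(3) False by simp
            then show ?thesis unfolding eqa by (rule memV'[OF nv])
          qed
        qed
        have sub: "V \<subseteq> V'" using memV'[of _ 0] p_pos by auto
        have "x \<in> V'" using memV'[of 0 1] sg prime_gt_1_nat[OF p_prime] by (simp add: addsg_def)
        hence "- V' \<subset> - V" using sub xV by auto
        hence "card (- V') < card (- V)" by (rule psubset_card_mono[rotated]) simp
        then obtain s where "card (UNIV::'a set) = p ^ s * card V'"
          using less.IH sg' cd by blast
        then show ?thesis using cV' by (intro exI[of _ "Suc s"]) simp
      qed
    qed
  qed
  have "addsg {0::'a}" by (simp add: addsg_def)
  from main[rule_format, OF this refl] show ?thesis unfolding p_def by simp
qed




lemma pow_card_same: "(x::'a::{finite,field}) ^ card (UNIV :: 'a set) = x"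
proof (cases "x = 0")
  case False
  have "x * (\<Prod>y\<in>UNIV-{0}. x * y) = x * x ^ (card (UNIV :: 'a set) - 1) * \<Prod>(UNIV-{0})"
    by (simp add: prod.distrib mult_ac)
  also have "x * x ^ (card (UNIV :: 'a set) - 1) = x ^ Suc (card (UNIV :: 'a set) - 1)"
    by (subst power_Suc) auto
  also have "Suc (card (UNIV :: 'a set) - 1) = card (UNIV :: 'a set)"
    using finite_UNIV_card_ge_0[where ?'a = 'a] by simp
  also have "(\<Prod>y\<in>UNIV-{0}. x * y) = (\<Prod>y\<in>UNIV-{0}. y)"
    by (rule prod.reindex_bij_witness[of _ "\<lambda>y. y / x" "\<lambda>y. x * y"]) (use False in auto)
  finally show ?thesis
    by simp
qed (use finite_UNIV_card_ge_0[where ?'a = 'a] in auto)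

lemma count_dvd_mult:
  assumes N: "0 < (N::nat)"
  shows "card {i. i < N \<and> N dvd i * c} = gcd c N"
proof -
  define g where "g = gcd c N"
  have gpos: "g > 0" using N unfolding g_def by simp
  obtain N' where N': "N = g * N'" unfolding g_def by (metis gcd_dvd2 dvdE)
  obtain c' where c': "c = g * c'" unfolding g_def by (metis gcd_dvd1 dvdE)
  have N'pos: "N' > 0" using N N' by (cases N') auto
  have cop: "coprime c' N'"
  proof -
    have h: "gcd (g*c') (g*N') = g * gcd c' N'" by (simp add: gcd_mult_distrib_nat)
    have gg: "gcd c N = g" by (simp add: g_def)
    have "gcd (g*c') (g*N') = g" using gg by (simp only: c'[symmetric] N'[symmetric])
    hence "g * gcd c' N' = g * 1" using h by simp
    hence "gcd c' N' = 1" using gpos by (metis mult_left_cancel less_irrefl)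
    thus ?thesis by (simp add: coprime_iff_gcd_eq_1)
  qed
  have eq: "{i. i < N \<and> N dvd i * c} = (\<lambda>s. N' * s) ` {..<g}"
  proof (intro equalityI subsetI)
    fix i assume "i \<in> {i. i < N \<and> N dvd i * c}"
    hence i: "i < N" "g * N' dvd g * (i * c')" using N' c' by (auto simp: ac_simps)
    hence "N' dvd i * c'" using gpos by simp
    hence "N' dvd i" using cop by (metis coprime_commute coprime_dvd_mult_left_iff)
    then obtain s where s: "i = N' * s" by blast
    have "s < g" using i(1) s N' N'pos by (simp add: mult.commute)
    thus "i \<in> (\<lambda>s. N' * s) ` {..<g}" using s by auto
  next
    fix i assume "i \<in> (\<lambda>s. N' * s) ` {..<g}"
    then obtain s where s: "s < g" "i = N' * s" by auto
    have "i < N" using s N' N'pos by (simp add: mult.commute)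
    moreover have "N dvd i * c" using s N' c' by (simp add: ac_simps)
    ultimately show "i \<in> {i. i < N \<and> N dvd i * c}" by simp
  qed
  have "inj_on (\<lambda>s. N' * s) {..<g}" using N'pos by (auto simp: inj_on_def)
  thus ?thesis unfolding eq g_def by (simp add: card_image)
qed

lemma linear_prod_dvd:
  fixes p :: "'b::field poly"
  assumes "finite R" "\<forall>r\<in>R. poly p r = 0"
  shows "(\<Prod>r\<in>R. [:- r, 1:]) dvd p"
  using assms
proof (induction R arbitrary: p rule: finite_induct)
  case empty then show ?case by simp
next
  case (insert a R)
  have "[:- a, 1:] dvd p" using insert.prems by (simp add: poly_eq_0_iff_dvd)
  then obtain p' where p': "p = [:- a, 1:] * p'" by blast
  have "\<forall>r\<in>R. poly p' r = 0"
  proof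
    fix r assume r: "r \<in> R"
    hence "r \<noteq> a" using insert.hyps by auto
    moreover have "poly p r = 0" using insert.prems r by auto
    ultimately show "poly p' r = 0" using p' by simp
  qed
  hence "(\<Prod>r\<in>R. [:- r, 1:]) dvd p'" by (rule insert.IH)
  moreover have "(\<Prod>r\<in>insert a R. [:- r, 1:]) = [:- a, 1:] * (\<Prod>r\<in>R. [:- r, 1:])"
    using insert.hyps by simp
  ultimately show ?case using p' by (metis mult_dvd_mono dvd_refl)
qed

lemma card_deg_less:
  assumes "k > 0"
  shows "card {b :: 'a::{finite,field} poly. degree b < k} = card (UNIV :: 'a set) ^ k"
proof -
  have bij: "bij_betw (\<lambda>b. map (coeff b) [0..<k]) {b :: 'a poly. degree b < k}
     {xs. set xs \<subseteq> UNIV \<and> length xs = k}"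
  proof (rule bij_betw_byWitness[where f' = Poly])
    show "\<forall>a\<in>{b :: 'a poly. degree b < k}. Poly (map (coeff a) [0..<k]) = a"
    proof
      fix a :: "'a poly" assume a: "a \<in> {b. degree b < k}"
      show "Poly (map (coeff a) [0..<k]) = a"
      proof (rule poly_eqI)
        fix i
        show "coeff (Poly (map (coeff a) [0..<k])) i = coeff a i"
          using a by (cases "i < k") (auto simp: nth_default_def coeff_eq_0)
      qed
    qed
    show "\<forall>a'\<in>{xs. set xs \<subseteq> UNIV \<and> length xs = k}. map (coeff (Poly a')) [0..<k] = a'"
      by (auto intro!: nth_equalityI simp: nth_default_def)
    show "(\<lambda>b. map (coeff b) [0..<k]) ` {b. degree b < k} \<subseteq> {xs. set xs \<subseteq> UNIV \<and> length xs = k}"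
      by auto
    have "degree (Poly xs) < k" if "length xs = k" for xs :: "'a list"
    proof -
      have "degree (Poly xs) \<le> k - 1"
        using that by (intro degree_le) (auto simp: nth_default_def)
      thus "degree (Poly xs) < k" using assms by simp
    qed
    then show "Poly ` {xs. set xs \<subseteq> UNIV \<and> length xs = k} \<subseteq> {b :: 'a poly. degree b < k}"
      by auto
  qed
  show ?thesis using bij_betw_same_card[OF bij] card_lists_length_eq[of "UNIV :: 'a set" k]
    by simp
qed




locale cc =
  fixes emb :: "'a::{finite,field} \<Rightarrow> 'b::{finite,field}"
    and n t \<alpha> :: nat and lam :: 'a and \<zeta> :: 'b
  assumes n_pos: "n > 0" and cop: "coprime n (card (UNIV :: 'a set))"
    and lam_nz: "lam \<noteq> 0"
    and t_pos: "t > 0" and lam_t: "lam ^ t = 1"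
    and t_ord: "\<forall>j. 0 < j \<and> j < t \<longrightarrow> lam ^ j \<noteq> 1"
    and emb_inj: "inj emb"
    and emb_add: "\<forall>x y. emb (x + y) = emb x + emb y"
    and emb_mult: "\<forall>x y. emb (x * y) = emb x * emb y"
    and emb_one: "emb 1 = 1"
    and zeta_tn: "\<zeta> ^ (t * n) = 1"
    and zeta_ord: "\<forall>j. 0 < j \<and> j < t * n \<longrightarrow> \<zeta> ^ j \<noteq> 1"
    and zeta_n: "\<zeta> ^ n = emb lam"
    and alpha_lt: "\<alpha> < n"
begin

lemma emb_zero: "emb 0 = 0"
  using emb_add[rule_format, of 0 0] by (metis add.right_neutral add_cancel_left_right)

sublocale E: field_hom emb
  by unfold_locales (auto simp: emb_add emb_mult emb_one emb_zero)

sublocale EI: inj_idom_hom emb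
  by unfold_locales (auto simp: emb_add emb_mult emb_one emb_zero inj_eq[OF emb_inj])

sublocale P: map_poly_inj_idom_hom emb ..

definition "q = card (UNIV :: 'a set)"
definition "N = t * n"
definition "e = 1 + t * \<alpha>"
definition "Cs = cyc_coset q N e"
definition "k = card Cs"
definition "\<beta> = \<zeta> ^ e"

lemma N_pos: "N > 0" using n_pos t_pos by (simp add: N_def)

lemma q_ge2: "q \<ge> 2"
proof -
  have "card {0::'a, 1} \<le> card (UNIV :: 'a set)" by (rule card_mono) auto
  thus ?thesis by (simp add: q_def)
qed

lemma pow_q: "(x::'a) ^ q = x" unfolding q_def by (rule pow_card_same)

lemma zeta_nz: "\<zeta> \<noteq> 0"
proof
  assume "\<zeta> = 0" then have "\<zeta>^(t*n) = 0" using N_pos by (simp add: N_def)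
  then show False using zeta_tn by simp
qed

lemma zpow_mod: "\<zeta> ^ a = \<zeta> ^ (a mod N)"
proof -
  have "\<zeta> ^ a = \<zeta> ^ (N * (a div N) + a mod N)" by simp
  also have "\<dots> = (\<zeta> ^ N) ^ (a div N) * \<zeta> ^ (a mod N)" by (simp only: power_add power_mult)
  finally have "\<zeta> ^ a = (\<zeta> ^ N) ^ (a div N) * \<zeta> ^ (a mod N)" .
  thus ?thesis using zeta_tn by (simp add: N_def)
qed

lemma zpow_one_mod: "\<zeta> ^ a = 1 \<longleftrightarrow> a mod N = 0"
proof
  assume "\<zeta> ^ a = 1"
  hence "\<zeta> ^ (a mod N) = 1" using zpow_mod by simp
  moreover have "a mod N < N" using N_pos by simp
  ultimately show "a mod N = 0" using zeta_ord unfolding N_def by (metis gr0I)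
next
  assume "a mod N = 0" thus "\<zeta> ^ a = 1" by (metis zpow_mod power_0)
qed

lemma zpow_eq: "\<zeta> ^ a = \<zeta> ^ b \<longleftrightarrow> a mod N = b mod N"
proof -
  have *: "\<zeta> ^ a = \<zeta> ^ b \<longleftrightarrow> a mod N = b mod N" if ab: "a \<le> b" for a b
  proof -
    have "\<zeta> ^ b = \<zeta> ^ a * \<zeta> ^ (b - a)" using ab by (simp flip: power_add)
    hence "\<zeta> ^ a = \<zeta> ^ b \<longleftrightarrow> \<zeta> ^ (b - a) = 1" using zeta_nz by auto
    also have "\<dots> \<longleftrightarrow> (b - a) mod N = 0" by (rule zpow_one_mod)
    also have "\<dots> \<longleftrightarrow> a mod N = b mod N"
      using mod_eq_dvd_iff_nat[OF ab, of N] by (auto simp: dvd_eq_mod_eq_0)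
    finally show ?thesis .
  qed
  show ?thesis by (cases "a \<le> b") (use * [of a b] * [of b a] in auto)
qed

lemma pow_pred: "(x::'c::monoid_mult) ^ q = x * x ^ (q - 1)"
proof -
  have qs: "q = Suc (q - 1)" using q_ge2 by simp
  from power_Suc[of x "q - 1"] show ?thesis by (simp only: qs[symmetric])
qed

lemma lam_pow_q1: "lam ^ (q - 1) = 1"
proof -
  have "lam * lam ^ (q - 1) = lam * 1"
    using pow_q[of lam] pow_pred[of lam] by simp
  thus ?thesis using lam_nz by simp
qed

lemma t_dvd: "t dvd (q - 1)"
proof -
  define r where "r = (q - 1) mod t"
  have "lam ^ (q - 1) = lam ^ (t * ((q - 1) div t) + r)" by (simp add: r_def)
  also have "\<dots> = (lam ^ t) ^ ((q - 1) div t) * lam ^ r" by (simp add: power_add power_mult)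
  finally have "lam ^ (q - 1) = (lam ^ t) ^ ((q - 1) div t) * lam ^ r" .
  hence "lam ^ r = 1" using lam_t lam_pow_q1 by simp
  moreover have "r < t" using t_pos by (simp add: r_def)
  ultimately have "r = 0" using t_ord by auto
  thus ?thesis by (simp add: r_def mod_eq_0_iff_dvd)
qed

lemma q_cong1: "[q = 1] (mod t)"
  using t_dvd q_ge2 by (subst cong_altdef_nat) auto

lemma cop_q_t: "coprime q t"
proof -
  have qs: "q = Suc (q - 1)" using q_ge2 by simp
  have "coprime (Suc (q - 1)) (q - 1)" by (rule coprime_Suc_left_nat)
  hence c1: "coprime q (q - 1)" by (simp only: qs[symmetric])
  obtain s where s: "q - 1 = t * s" using t_dvd by blast
  show ?thesis using c1 unfolding s by simp
qed

lemma cop_q_N: "coprime q N"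
  using cop_q_t cop unfolding N_def q_def by (simp add: coprime_commute)

lemma emb_of_nat: "emb (of_nat j) = of_nat j"
  by (induction j) (auto simp: emb_add emb_one emb_zero)

lemma CHAR_eq: "CHAR('b) = CHAR('a)"
proof (rule CHAR_eqI)
  show "of_nat CHAR('a) = (0::'b)" using emb_of_nat[of "CHAR('a)"] emb_zero by simp
next
  fix j assume "of_nat j = (0::'b)"
  hence "emb (of_nat j) = emb 0" using emb_of_nat emb_zero by simp
  hence "of_nat j = (0::'a)" using emb_inj by (simp add: inj_eq)
  thus "CHAR('a) dvd j" by (simp add: of_nat_eq_0_iff_char_dvd)
qed

lemma prime_CHAR_b: "prime CHAR('b)"
  by (rule prime_CHAR_semidom) (rule finite_imp_CHAR_pos, simp)

lemma q_pow: "\<exists>r. q = CHAR('b) ^ r"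
  using card_finite_field_prime_power[where 'a='a] CHAR_eq unfolding q_def by simp

lemma frob_add: "((x::'b) + y) ^ q = x ^ q + y ^ q"
proof -
  obtain r where r: "q = CHAR('b) ^ r" using q_pow by blast
  show ?thesis by (rule freshmans_dream'[OF prime_CHAR_b r])
qed

lemma frob_sum: "(sum (g :: _ \<Rightarrow> 'b) A) ^ q = (\<Sum>i\<in>A. g i ^ q)"
proof -
  obtain r where r: "q = CHAR('b) ^ r" using q_pow by blast
  show ?thesis by (rule freshmans_dream_sum'[OF prime_CHAR_b r])
qed

lemma emb_pow_q: "emb x ^ q = emb x"
  by (metis E.hom_power pow_q)

lemma frob_neg: "(- (x::'b)) ^ q = - (x ^ q)"
proof -
  have "(- x) ^ q + x ^ q = 0" using frob_add[of "-x" x] q_ge2 by (simp add: power_0_left)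
  thus ?thesis by (simp add: eq_neg_iff_add_eq_0)
qed

lemma poly_frob: "poly (map_poly emb c) (z ^ q) = (poly (map_poly emb c) z) ^ q"
proof -
  have "poly (map_poly emb c) z ^ q = (\<Sum>i\<le>degree (map_poly emb c). coeff (map_poly emb c) i * z ^ i) ^ q"
    by (simp add: poly_altdef)
  also have "\<dots> = (\<Sum>i\<le>degree (map_poly emb c). (coeff (map_poly emb c) i * z ^ i) ^ q)"
    by (rule frob_sum)
  also have "\<dots> = (\<Sum>i\<le>degree (map_poly emb c). coeff (map_poly emb c) i * (z ^ q) ^ i)"
    by (intro sum.cong refl) (simp add: power_mult_distrib emb_pow_q flip: power_mult,
        simp add: mult.commute)
  also have "\<dots> = poly (map_poly emb c) (z ^ q)" by (simp add: poly_altdef)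
  finally show ?thesis by simp
qed

lemma poly_frob_iter: "poly (map_poly emb c) (z ^ (q ^ h)) = (poly (map_poly emb c) z) ^ (q ^ h)"
proof (induction h)
  case 0 then show ?case by simp
next
  case (Suc h)
  have "z ^ (q ^ Suc h) = (z ^ (q ^ h)) ^ q" by (simp only: power_Suc2 power_mult)
  hence "poly (map_poly emb c) (z ^ (q ^ Suc h)) = (poly (map_poly emb c) (z ^ (q ^ h))) ^ q"
    by (simp add: poly_frob)
  also have "\<dots> = (poly (map_poly emb c) z) ^ (q ^ Suc h)" unfolding Suc.IH by (simp only: power_Suc2 power_mult)
  finally show ?case .
qed

lemma in_range: assumes "(y::'b) ^ q = y" shows "y \<in> range emb"
proof -
  define p0 :: "'b poly" where "p0 = [:0, - 1:] + monom 1 q"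
  have dq: "degree (monom (1::'b) q) = q" by (simp add: degree_monom_eq)
  have dp: "degree p0 = q" unfolding p0_def using q_ge2 dq
    by (subst degree_add_eq_right) auto
  have p0nz: "p0 \<noteq> 0" using dp q_ge2 by auto
  have roots: "{x. poly p0 x = 0} = {x. x ^ q = x}" by (auto simp: p0_def poly_monom)
  have sub: "range emb \<subseteq> {x. x ^ q = x}" using emb_pow_q by auto
  have "card {x::'b. x ^ q = x} \<le> q" using card_poly_roots_bound[OF p0nz] dp roots by simp
  moreover have "card (range emb) = q" using emb_inj by (simp add: card_image q_def)
  moreover have "card (range emb) \<le> card {x::'b. x ^ q = x}" by (rule card_mono) (use sub in auto)
  ultimately have "range emb = {x. x ^ q = x}"
    using sub by (intro card_subset_eq) auto
  thus ?thesis using assms by auto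
qed

lemma EFstar: "(\<exists>b. b \<noteq> 0 \<and> z = emb b) \<longleftrightarrow> z \<noteq> 0 \<and> z ^ (q - 1) = 1"
proof
  assume "\<exists>b. b \<noteq> 0 \<and> z = emb b"
  then obtain b where b: "b \<noteq> 0" "z = emb b" by blast
  have "b ^ (q - 1) = 1"
  proof -
    have "b * b ^ (q - 1) = b * 1"
      using pow_q[of b] pow_pred[of b] by simp
    thus ?thesis using b by simp
  qed
  thus "z \<noteq> 0 \<and> z ^ (q - 1) = 1" using b by (auto simp flip: E.hom_power)
next
  assume z: "z \<noteq> 0 \<and> z ^ (q - 1) = 1"
  hence "z ^ q = z" using pow_pred[of z] by simp
  then obtain b where "z = emb b" using in_range by blast
  thus "\<exists>b. b \<noteq> 0 \<and> z = emb b" using z emb_zero by auto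
qed

end



lemma monic_dvd_eq:
  fixes A B :: "'b::field poly"
  assumes "lead_coeff A = 1" "lead_coeff B = 1" "degree A = degree B" "A dvd B"
  shows "A = B"
proof -
  obtain u where u: "B = A * u" using assms(4) by blast
  have Bnz: "B \<noteq> 0" using assms(2) by auto
  hence Anz: "A \<noteq> 0" and unz: "u \<noteq> 0" using u by auto
  have "degree B = degree A + degree u" using u Anz unz by (simp add: degree_mult_eq)
  hence du: "degree u = 0" using assms(3) by simp
  have "lead_coeff B = lead_coeff A * lead_coeff u" using u by (simp add: lead_coeff_mult)
  hence "lead_coeff u = 1" using assms by simp
  hence "u = 1" using du by (metis degree_0_id one_pCons)
  thus ?thesis using u by simp
qed

context cc
begin

lemma cong1t: "[1 + t * x = 1] (mod t)"
  unfolding cong_def by (rule mod_mult_self2)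

lemma e_cong1: "[e = 1] (mod t)" unfolding e_def by (rule cong1t)

definition "P0 = (LEAST h. 0 < h \<and> e * q ^ h mod N = e mod N)"

lemma P0_ex: "0 < totient N \<and> e * q ^ totient N mod N = e mod N"
proof
  show "0 < totient N" using N_pos by simp
  have "[q ^ totient N = 1] (mod N)" by (rule euler_theorem[OF cop_q_N])
  hence "[e * q ^ totient N = e * 1] (mod N)" by (rule cong_scalar_left)
  thus "e * q ^ totient N mod N = e mod N" by (simp add: cong_def)
qed

lemma P0_props: "0 < P0" "e * q ^ P0 mod N = e mod N"
  using LeastI_ex[of "\<lambda>h. 0 < h \<and> e * q ^ h mod N = e mod N"] P0_ex unfolding P0_def by blast+

lemma P0_min: "0 < h \<Longrightarrow> h < P0 \<Longrightarrow> e * q ^ h mod N \<noteq> e mod N"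
  unfolding P0_def using not_less_Least by blast

lemma shift_P0: "e * q ^ (P0 + x) mod N = e * q ^ x mod N"
proof -
  have "e * q ^ (P0 + x) mod N = ((e * q ^ P0) * q ^ x) mod N" by (simp add: power_add mult.assoc)
  also have "\<dots> = ((e * q ^ P0 mod N) * q ^ x) mod N" by (simp add: mod_mult_left_eq)
  also have "\<dots> = ((e mod N) * q ^ x) mod N" using P0_props by simp
  also have "\<dots> = e * q ^ x mod N" by (simp add: mod_mult_left_eq)
  finally show ?thesis .
qed

lemma period: "e * q ^ h mod N = e * q ^ (h mod P0) mod N"
proof -
  have "e * q ^ (P0 * s + r) mod N = e * q ^ r mod N" for s r
  proof (induction s)
    case 0 then show ?case by simp
  next
    case (Suc s)
    have "P0 * Suc s + r = P0 + (P0 * s + r)" by simp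
    show ?case using shift_P0[of "P0 * s + r"] Suc by (simp add: add.assoc)
  qed
  from this[of "h div P0" "h mod P0"] show ?thesis by simp
qed

lemma coset_inj: "inj_on (\<lambda>h. e * q ^ h mod N) {..<P0}"
proof -
  have *: False if ij: "i < j" "j < P0" and eq: "e * q ^ i mod N = e * q ^ j mod N" for i j
  proof -
    have cp: "coprime (q ^ i) N" using cop_q_N by simp
    have "[e * 1 * q ^ i = e * q ^ (j - i) * q ^ i] (mod N)"
      using eq ij by (simp add: cong_def mult.assoc flip: power_add)
    hence "[e * 1 = e * q ^ (j - i)] (mod N)" using cong_mult_rcancel_nat[OF cp] by blast
    hence "e * q ^ (j - i) mod N = e mod N" by (simp add: cong_def)
    moreover have "0 < j - i" "j - i < P0" using ij by auto
    ultimately show False using P0_min by blast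
  qed
  show ?thesis
  proof (rule inj_onI)
    fix i j assume "i \<in> {..<P0}" "j \<in> {..<P0}" and eq: "e * q ^ i mod N = e * q ^ j mod N"
    thus "i = j" using *[of i j] *[of j i] by (metis linorder_neqE_nat lessThan_iff)
  qed
qed

lemma Cs_eq: "Cs = (\<lambda>h. e * q ^ h mod N) ` {..<P0}"
proof
  show "Cs \<subseteq> (\<lambda>h. e * q ^ h mod N) ` {..<P0}"
  proof
    fix c assume "c \<in> Cs"
    then obtain h where h: "c = e * q ^ h mod N" unfolding Cs_def cyc_coset_def by blast
    hence "c = e * q ^ (h mod P0) mod N" using period by simp
    moreover have "h mod P0 < P0" using P0_props by simp
    ultimately show "c \<in> (\<lambda>h. e * q ^ h mod N) ` {..<P0}" by blast
  qed
  show "(\<lambda>h. e * q ^ h mod N) ` {..<P0} \<subseteq> Cs" unfolding Cs_def cyc_coset_def by blast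
qed

lemma k_eq: "k = P0"
  unfolding k_def Cs_eq using coset_inj by (simp add: card_image)

lemma k_pos: "0 < k" using k_eq P0_props by simp

lemma e_qk: "e * q ^ k mod N = e mod N" using k_eq P0_props by simp

lemma Cs_finite: "finite Cs" unfolding Cs_eq by simp

lemma Cs_lt: "c \<in> Cs \<Longrightarrow> c < N" unfolding Cs_eq using N_pos by auto

lemma e_in: "e mod N \<in> Cs" unfolding Cs_def cyc_coset_def by (auto intro!: exI[of _ 0])

lemma Cs_cong1: assumes "c \<in> Cs" shows "[c = 1] (mod t)"
proof -
  obtain h where h: "c = e * q ^ h mod N" using assms unfolding Cs_def cyc_coset_def by blast
  have "[c = e * q ^ h] (mod N)" unfolding h by (simp add: cong_def)
  hence "[c = e * q ^ h] (mod t)" by (rule cong_dvd_modulus_nat) (simp add: N_def)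
  moreover have "[e * q ^ h = 1 * 1 ^ h] (mod t)"
    by (intro cong_mult cong_pow q_cong1 e_cong1)
  ultimately show ?thesis by (simp add: cong_trans)
qed

lemma Cs_mulq: assumes "c \<in> Cs" shows "c * q mod N \<in> Cs"
proof -
  obtain h where h: "c = e * q ^ h mod N" using assms unfolding Cs_def cyc_coset_def by blast
  have "c * q mod N = (e * q ^ h mod N) * q mod N" by (simp add: h)
  also have "\<dots> = (e * q ^ h) * q mod N" by (rule mod_mult_left_eq)
  also have "\<dots> = e * q ^ Suc h mod N" by (simp only: power_Suc2 mult.assoc)
  finally have "c * q mod N = e * q ^ Suc h mod N" .
  thus ?thesis unfolding Cs_def cyc_coset_def by blast
qed

lemma Cs_bij: "(\<lambda>c. c * q mod N) ` Cs = Cs"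
proof (rule endo_inj_surj[OF Cs_finite])
  show "(\<lambda>c. c * q mod N) ` Cs \<subseteq> Cs" using Cs_mulq by auto
  show "inj_on (\<lambda>c. c * q mod N) Cs"
  proof (rule inj_onI)
    fix a b assume a: "a \<in> Cs" and b: "b \<in> Cs" and eq: "a * q mod N = b * q mod N"
    hence "[a * q = b * q] (mod N)" by (simp add: cong_def)
    hence "[a = b] (mod N)" using cong_mult_rcancel_nat cop_q_N by blast
    thus "a = b" using Cs_lt[OF a] Cs_lt[OF b] by (simp add: cong_def)
  qed
qed

lemma Cs_inj_zeta: "inj_on (\<lambda>c. \<zeta> ^ c) Cs"
  by (rule inj_onI) (use Cs_lt in \<open>auto simp: zpow_eq\<close>)

definition "R = (\<lambda>i. \<zeta> ^ (1 + t * i)) ` {..<n}"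

lemma R_inj: "inj_on (\<lambda>i. \<zeta> ^ (1 + t * i)) {..<n}"
proof (rule inj_onI)
  fix i j assume i: "i \<in> {..<n}" and j: "j \<in> {..<n}" and eq: "\<zeta> ^ (1 + t * i) = \<zeta> ^ (1 + t * j)"
  have "(1 + t*i) mod N = (1 + t*j) mod N" using eq by (simp only: zpow_eq)
  hence "[1 + t * i = 1 + t * j] (mod N)" by (simp only: cong_def)
  hence "[t * i = t * j] (mod N)" by (simp only: cong_add_lcancel_nat)
  hence "t * (i mod n) = t * (j mod n)" by (simp add: cong_def N_def mod_mult_mult1)
  thus "i = j" using i j t_pos by simp
qed

lemma card_R: "card R = n" unfolding R_def using R_inj by (simp add: card_image)

lemma finite_R: "finite R" unfolding R_def by simp

lemma root_form: assumes "[c = 1] (mod t)" shows "\<zeta> ^ c \<in> R"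
proof -
  have h1: "[c + N = 1] (mod t)" using assms by (simp add: N_def cong_def)
  have dv: "t dvd (c + N - 1)" using cong_altdef_nat[of 1 "c+N" t] h1 N_pos by simp
  define w where "w = (c + N - 1) div t"
  have tw: "t * w = c + N - 1" using dv unfolding w_def by simp
  define i where "i = w mod n"
  have ti: "t * i = t * w mod N" by (simp add: i_def N_def mod_mult_mult1)
  have "(1 + t * i) mod N = (1 + t * w) mod N" unfolding ti by (rule mod_add_right_eq)
  also have "1 + t * w = c + N" using tw N_pos by simp
  finally have "(1 + t * i) mod N = c mod N" by simp
  hence "\<zeta> ^ c = \<zeta> ^ (1 + t * i)" unfolding zpow_eq by (rule sym)
  moreover have "i < n" using n_pos by (simp add: i_def)
  ultimately show ?thesis unfolding R_def by blast
qed

definition "f = xn_minus n lam"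
definition "Fp = map_poly emb f"
definition "mpol = coset_poly \<zeta> Cs"

lemma f_alt: "f = monom 1 n + [:- lam:]"
  by (simp add: f_def xn_minus_def)

lemma degree_f: "degree f = n" and lead_f: "lead_coeff f = 1"
proof -
  have "degree [:- lam:] < degree (monom (1::'a) n)" using n_pos by (simp add: degree_monom_eq)
  hence d: "degree f = n" unfolding f_alt by (simp add: degree_add_eq_left degree_monom_eq)
  thus "degree f = n" .
  have c0: "coeff [:- lam:] n = 0" using n_pos by (cases n) auto
  have "coeff f n = coeff (monom 1 n) n + coeff [:- lam:] n" unfolding f_alt by (rule coeff_add)
  also have "\<dots> = 1" using c0 by simp
  finally show "lead_coeff f = 1" using d by simp
qed

lemma f_nz: "f \<noteq> 0" using degree_f lead_f by auto

lemma Fp_alt: "Fp = monom 1 n + [:- emb lam:]"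
proof -
  have "map_poly emb [:- lam:] = [:- emb lam:]"
    by (rule poly_eqI) (simp add: coeff_map_poly emb_zero E.hom_uminus coeff_pCons split: nat.split)
  thus ?thesis unfolding Fp_def f_alt by (simp add: P.hom_add map_poly_monom emb_zero)
qed

lemma degree_Fp: "degree Fp = n" and lead_Fp: "lead_coeff Fp = 1"
  using degree_f lead_f by (simp_all add: Fp_def)

lemma Fp_root: assumes "[c = 1] (mod t)" shows "poly Fp (\<zeta> ^ c) = 0"
proof -
  have "(c * n) mod (t * n) = (c mod t) * n" by (rule mod_mult_mult2)
  also have "c mod t = 1 mod t" using assms by (simp add: cong_def)
  also have "(1 mod t) * n = (1 * n) mod (t * n)" by (simp add: mod_mult_mult2)
  finally have "\<zeta> ^ (c * n) = \<zeta> ^ n" by (simp add: zpow_eq N_def)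
  thus ?thesis by (simp add: Fp_alt poly_monom zeta_n power_mult)
qed

lemma Fp_prod: "Fp = (\<Prod>r\<in>R. [:- r, 1:])"
proof -
  have dv: "(\<Prod>r\<in>R. [:- r, 1:]) dvd Fp"
  proof (rule linear_prod_dvd[OF finite_R], rule ballI)
    fix r assume "r \<in> R"
    then obtain i where "r = \<zeta> ^ (1 + t * i)" unfolding R_def by blast
    moreover have "[1 + t * i = 1] (mod t)" by (rule cong1t)
    ultimately show "poly Fp r = 0" using Fp_root[OF cong1t[of i]] by simp
  qed
  have deg: "degree (\<Prod>r\<in>R. [:- r, 1:]) = n"
    by (subst degree_prod_sum_eq) (auto simp: card_R)
  have lc: "lead_coeff (\<Prod>r\<in>R. [:- r, 1:]) = 1" by (simp add: lead_coeff_prod)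
  show ?thesis using monic_dvd_eq[OF lc lead_Fp _ dv] deg degree_Fp by simp
qed

lemma ZC_sub_R: "(\<lambda>c. \<zeta> ^ c) ` Cs \<subseteq> R" using root_form Cs_cong1 by auto

lemma mpol_alt: "mpol = (\<Prod>r\<in>(\<lambda>c. \<zeta> ^ c) ` Cs. [:- r, 1:])"
  unfolding mpol_def coset_poly_def by (simp add: prod.reindex[OF Cs_inj_zeta])

definition "gp = (\<Prod>r\<in>R - (\<lambda>c. \<zeta> ^ c) ` Cs. [:- r, 1:])"

lemma Fp_split: "Fp = gp * mpol"
  unfolding Fp_prod gp_def mpol_alt by (rule prod.subset_diff[OF ZC_sub_R finite_R])

lemma mpol_nz: "mpol \<noteq> 0" unfolding mpol_alt by (simp add: prod_zero_iff)

lemma degree_mpol: "degree mpol = k"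
  unfolding mpol_alt k_def
  by (subst degree_prod_sum_eq) (auto simp: card_image[OF Cs_inj_zeta])

lemma gp_eq: "gp = Fp div mpol" using Fp_split mpol_nz by simp

lemma beta_in: "\<beta> \<in> (\<lambda>c. \<zeta> ^ c) ` Cs"
  using e_in zpow_mod[of e] unfolding \<beta>_def by blast

lemma gp_beta: "poly gp \<beta> \<noteq> 0"
  unfolding gp_def using beta_in by (simp add: poly_prod prod_zero_iff finite_R)

lemma Fp_beta: "poly Fp \<beta> = 0"
  unfolding \<beta>_def e_def by (rule Fp_root) (rule cong1t)

interpretation Fr: comm_ring_hom "\<lambda>y::'b. y ^ q"
  by unfold_locales (use q_ge2 frob_add in \<open>auto simp: power_mult_distrib\<close>)

interpretation FrP: map_poly_comm_ring_hom "\<lambda>y::'b. y ^ q" ..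

lemma mpol_frob: "map_poly (\<lambda>y. y ^ q) mpol = mpol"
proof -
  have "map_poly (\<lambda>y. y ^ q) mpol = (\<Prod>c\<in>Cs. map_poly (\<lambda>y. y ^ q) [:- (\<zeta> ^ c), 1:])"
    unfolding mpol_def coset_poly_def by (rule FrP.hom_prod)
  also have "\<dots> = (\<Prod>c\<in>Cs. [:- (\<zeta> ^ (c * q mod N)), 1:])"
  proof (rule prod.cong[OF refl])
    fix c
    have "(\<zeta> ^ c) ^ q = \<zeta> ^ (c * q mod N)" by (simp add: power_mult flip: zpow_mod)
    thus "map_poly (\<lambda>y. y ^ q) [:- (\<zeta> ^ c), 1:] = [:- (\<zeta> ^ (c * q mod N)), 1:]"
      using q_ge2 by (simp add: map_poly_pCons frob_neg power_0_left)
  qed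
  also have "\<dots> = (\<Prod>c\<in>(\<lambda>c. c * q mod N) ` Cs. [:- (\<zeta> ^ c), 1:])"
  proof (rule prod.reindex[symmetric, unfolded comp_def])
    show "inj_on (\<lambda>c. c * q mod N) Cs"
      using Cs_bij Cs_finite by (metis card_image eq_card_imp_inj_on)
  qed
  also have "\<dots> = mpol" unfolding Cs_bij mpol_def coset_poly_def ..
  finally show ?thesis .
qed

lemma mpol_coeff_range: "coeff mpol i \<in> range emb"
proof (rule in_range)
  have "coeff (map_poly (\<lambda>y. y ^ q) mpol) i = coeff mpol i ^ q"
    using q_ge2 by (simp add: coeff_map_poly power_0_left)
  thus "coeff mpol i ^ q = coeff mpol i" using mpol_frob by simp
qed

definition "m0 = map_poly (inv_into UNIV emb) mpol"

lemma inv_emb_0: "inv_into UNIV emb 0 = 0"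
  using emb_zero emb_inj by (metis inv_into_f_f UNIV_I)

lemma m0_map: "map_poly emb m0 = mpol"
proof (rule poly_eqI)
  fix i
  have "coeff (map_poly emb m0) i = emb (inv_into UNIV emb (coeff mpol i))"
    unfolding m0_def by (simp add: coeff_map_poly inv_emb_0 emb_zero)
  also have "\<dots> = coeff mpol i" using mpol_coeff_range by (simp add: f_inv_into_f)
  finally show "coeff (map_poly emb m0) i = coeff mpol i" .
qed

definition "h0 = f div m0"

lemma h0_map: "map_poly emb h0 = gp"
  unfolding h0_def gp_eq Fp_def by (simp add: E.map_poly_div m0_map)

lemma m0_dvd: "m0 dvd f"
proof -
  have "map_poly emb m0 dvd map_poly emb f" using Fp_split unfolding m0_map Fp_def[symmetric] by simp
  thus ?thesis by (rule E.dvd_map_poly_hom_imp_dvd)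
qed

lemma f_split: "f = m0 * h0" unfolding h0_def using m0_dvd by simp

lemma degree_m0: "degree m0 = k"
proof -
  have "degree (map_poly emb m0) = degree m0" by simp
  thus ?thesis using degree_mpol m0_map by simp
qed

lemma m0_nz: "m0 \<noteq> 0" using m0_map mpol_nz by auto

lemma h0_nz: "h0 \<noteq> 0" using f_split f_nz by auto

end



context cc
begin

definition "Code = irr_code emb n lam \<zeta> Cs"

lemma map_inj: assumes "map_poly emb c = map_poly emb d" shows "c = d"
proof (rule poly_eqI)
  fix i
  have "coeff (map_poly emb c) i = coeff (map_poly emb d) i" using assms by simp
  hence "emb (coeff c i) = emb (coeff d i)" by (simp add: coeff_map_poly emb_zero)
  thus "coeff c i = coeff d i" using emb_inj by (simp add: inj_eq)
qed

lemma Code_iff: "c \<in> Code \<longleftrightarrow> (\<exists>a. c = (a * h0) mod f)"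
proof -
  have g: "map_poly emb (xn_minus n lam) div coset_poly \<zeta> Cs = map_poly emb h0"
    using h0_map gp_eq unfolding Fp_def f_def mpol_def by simp
  have m: "(map_poly emb a * map_poly emb h0) mod map_poly emb f = map_poly emb ((a * h0) mod f)" for a
    by (simp add: E.map_poly_mod P.hom_mult)
  have "c \<in> Code \<longleftrightarrow> (\<exists>a. map_poly emb c = (map_poly emb a * map_poly emb h0) mod map_poly emb f)"
    unfolding Code_def irr_code_def g f_def by simp
  also have "\<dots> \<longleftrightarrow> (\<exists>a. map_poly emb c = map_poly emb ((a * h0) mod f))" by (simp only: m)
  also have "\<dots> \<longleftrightarrow> (\<exists>a. c = (a * h0) mod f)" using map_inj by blast
  finally show ?thesis .
qed

lemma mod_h0: "(a * h0) mod f = (a mod m0) * h0"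
  unfolding f_split by (rule mod_mult_mult2)

lemma Code_eq: "Code = (\<lambda>b. b * h0) ` {b. degree b < k}"
proof
  show "Code \<subseteq> (\<lambda>b. b * h0) ` {b. degree b < k}"
  proof
    fix c assume "c \<in> Code"
    then obtain a where a: "c = (a * h0) mod f" using Code_iff by blast
    have "degree (a mod m0) < k"
      using degree_mod_less[OF m0_nz, of a] degree_m0 k_pos by auto
    thus "c \<in> (\<lambda>b. b * h0) ` {b. degree b < k}" using a mod_h0 by auto
  qed
  show "(\<lambda>b. b * h0) ` {b. degree b < k} \<subseteq> Code"
  proof
    fix c assume "c \<in> (\<lambda>b. b * h0) ` {b. degree b < k}"
    then obtain b where b: "c = b * h0" "degree b < k" by auto
    have "b mod m0 = b" using b(2) degree_m0 by (simp add: mod_poly_less)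
    hence "c = (b * h0) mod f" using b mod_h0 by simp
    thus "c \<in> Code" using Code_iff by blast
  qed
qed

lemma card_Code: "card Code = q ^ k"
proof -
  have "inj_on (\<lambda>b. b * h0) {b. degree b < k}" using h0_nz by (auto simp: inj_on_def)
  hence "card Code = card {b :: 'a poly. degree b < k}" unfolding Code_eq by (simp add: card_image)
  also have "\<dots> = q ^ k" using card_deg_less[OF k_pos] unfolding q_def .
  finally show ?thesis .
qed

lemma finite_Code: "finite Code"
  by (rule card_ge_0_finite) (use q_ge2 in \<open>simp add: card_Code\<close>)

lemma Code_deg: "c \<in> Code \<Longrightarrow> c = 0 \<or> degree c < n"
  using Code_iff degree_mod_less[OF f_nz] degree_f by metis

lemma zero_in_Code: "0 \<in> Code" using Code_iff by (metis mod_0 mult_zero_left)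

lemma cshift_alt: "cshift n lam c = (monom 1 1 * c) mod f"
  by (simp add: cshift_def f_def)

lemma Code_smult: "c \<in> Code \<Longrightarrow> smult b c \<in> Code"
  unfolding Code_iff by (metis mod_smult_left mult_smult_left)

lemma Code_shift: "c \<in> Code \<Longrightarrow> cshift n lam c \<in> Code"
  unfolding Code_iff cshift_alt by (metis mod_mult_right_eq mult.assoc)

definition "psi c = poly (map_poly emb c) \<beta>"

lemma psi_bh: "psi (b * h0) = poly (map_poly emb b) \<beta> * poly gp \<beta>"
  unfolding psi_def by (simp add: P.hom_mult h0_map)

lemma beta_pow: "\<beta> ^ (q ^ h) = \<zeta> ^ (e * q ^ h mod N)"
  unfolding \<beta>_def by (simp add: power_mult flip: zpow_mod)

lemma key: assumes "degree b < k" "poly (map_poly emb b) \<beta> = 0" shows "b = 0"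
proof (rule ccontr)
  assume bnz: "b \<noteq> 0"
  hence Enz: "map_poly emb b \<noteq> 0" using map_inj by fastforce
  have sub: "(\<lambda>c. \<zeta> ^ c) ` Cs \<subseteq> {x. poly (map_poly emb b) x = 0}"
  proof
    fix r assume "r \<in> (\<lambda>c. \<zeta> ^ c) ` Cs"
    then obtain h where "r = \<zeta> ^ (e * q ^ h mod N)" unfolding Cs_def cyc_coset_def by blast
    hence "r = \<beta> ^ (q ^ h)" using beta_pow by simp
    hence "poly (map_poly emb b) r = 0 ^ (q ^ h)" using poly_frob_iter assms(2) by simp
    also have "\<dots> = 0" using q_ge2 by simp
    finally show "r \<in> {x. poly (map_poly emb b) x = 0}" by simp
  qed
  have "k = card ((\<lambda>c. \<zeta> ^ c) ` Cs)" unfolding k_def by (simp add: card_image[OF Cs_inj_zeta])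
  also have "\<dots> \<le> card {x. poly (map_poly emb b) x = 0}"
    by (rule card_mono[OF poly_roots_finite[OF Enz] sub])
  also have "\<dots> \<le> degree (map_poly emb b)" by (rule card_poly_roots_bound[OF Enz])
  also have "\<dots> = degree b" by simp
  finally show False using assms(1) by simp
qed

lemma psi_inj: assumes "c1 \<in> Code" "c2 \<in> Code" "psi c1 = psi c2" shows "c1 = c2"
proof -
  obtain b1 where b1: "c1 = b1 * h0" "degree b1 < k" using assms(1) unfolding Code_eq by auto
  obtain b2 where b2: "c2 = b2 * h0" "degree b2 < k" using assms(2) unfolding Code_eq by auto
  have "poly (map_poly emb b1) \<beta> = poly (map_poly emb b2) \<beta>"
    using assms(3) gp_beta unfolding b1 b2 psi_bh by simp
  hence "poly (map_poly emb (b1 - b2)) \<beta> = 0" by (simp add: P.hom_minus)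
  moreover have "degree (b1 - b2) < k"
    using b1(2) b2(2) degree_diff_le_max[of b1 b2] by simp
  ultimately have "b1 - b2 = 0" using key by blast
  thus ?thesis using b1 b2 by simp
qed

lemma psi_zero: "psi 0 = 0" by (simp add: psi_def)

lemma psi_nz: "c \<in> Code \<Longrightarrow> c \<noteq> 0 \<Longrightarrow> psi c \<noteq> 0"
  using psi_inj zero_in_Code psi_zero by metis

lemma poly_mod_Fp: "poly (p mod Fp) \<beta> = poly p \<beta>"
proof -
  have "poly p \<beta> = poly (p div Fp * Fp + p mod Fp) \<beta>" by simp
  also have "\<dots> = poly (p div Fp) \<beta> * poly Fp \<beta> + poly (p mod Fp) \<beta>" by (simp only: poly_add poly_mult)
  also have "\<dots> = poly (p mod Fp) \<beta>" using Fp_beta by simp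
  finally show ?thesis by simp
qed

lemma psi_shift: "psi (cshift n lam c) = \<beta> * psi c"
proof -
  have "map_poly emb (cshift n lam c) = (monom 1 1 * map_poly emb c) mod Fp"
    unfolding cshift_alt Fp_def by (simp add: E.map_poly_mod P.hom_mult map_poly_monom emb_zero)
  thus ?thesis unfolding psi_def by (simp add: poly_mod_Fp poly_monom)
qed

lemma psi_smult: "psi (smult b c) = emb b * psi c"
proof -
  have "map_poly emb (smult b c) = smult (emb b) (map_poly emb c)"
    by (rule poly_eqI) (simp add: coeff_map_poly emb_zero E.hom_mult)
  thus ?thesis unfolding psi_def by simp
qed

lemma iter_shift: "c \<in> Code \<Longrightarrow> (cshift n lam ^^ j) c \<in> Code \<and> psi ((cshift n lam ^^ j) c) = \<beta> ^ j * psi c"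
  by (induction j) (auto simp: Code_shift psi_shift)

end



context cc
begin

definition "H = {\<beta> ^ j * emb b | j b. b \<noteq> 0}"
definition "G = gcd ((q - 1) * e) N"

lemma beta_nz: "\<beta> \<noteq> 0" unfolding \<beta>_def using zeta_nz by simp

lemma beta_N: "\<beta> ^ N = 1"
proof -
  have "\<beta> ^ N = \<zeta> ^ (e * (t * n))" unfolding \<beta>_def N_def by (rule power_mult[symmetric])
  also have "\<dots> = (\<zeta> ^ (t * n)) ^ e" by (subst mult.commute) (rule power_mult)
  finally show ?thesis using zeta_tn by simp
qed

lemma bpow_mod: "\<beta> ^ a = \<beta> ^ (a mod N)"
proof -
  have "\<beta> ^ a = \<beta> ^ (N * (a div N) + a mod N)" by simp
  also have "\<dots> = (\<beta> ^ N) ^ (a div N) * \<beta> ^ (a mod N)" by (simp only: power_add power_mult)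
  finally show ?thesis using beta_N by simp
qed

lemma H_nz: "h \<in> H \<Longrightarrow> h \<noteq> 0"
  unfolding H_def using beta_nz by auto

lemma H_mult: "h1 \<in> H \<Longrightarrow> h2 \<in> H \<Longrightarrow> h1 * h2 \<in> H"
proof -
  assume "h1 \<in> H" "h2 \<in> H"
  then obtain j1 b1 j2 b2 where h: "h1 = \<beta> ^ j1 * emb b1" "b1 \<noteq> 0" "h2 = \<beta> ^ j2 * emb b2" "b2 \<noteq> 0"
    unfolding H_def by blast
  have "h1 * h2 = \<beta> ^ (j1 + j2) * emb (b1 * b2)" using h by (simp add: power_add E.hom_mult mult_ac)
  moreover have "b1 * b2 \<noteq> 0" using h by simp
  ultimately show ?thesis unfolding H_def by blast
qed

lemma H_inv: "h \<in> H \<Longrightarrow> inverse h \<in> H"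
proof -
  assume "h \<in> H"
  then obtain j b where h: "h = \<beta> ^ j * emb b" "b \<noteq> 0" unfolding H_def by blast
  have "\<beta> ^ j * \<beta> ^ (j * (N - 1)) = 1"
  proof -
    have "j + j * (N - 1) = N * j" using N_pos by (cases N) (auto simp: algebra_simps)
    hence "\<beta> ^ j * \<beta> ^ (j * (N - 1)) = (\<beta> ^ N) ^ j" by (simp flip: power_add power_mult)
    thus ?thesis using beta_N by simp
  qed
  hence inv: "inverse (\<beta> ^ j) = \<beta> ^ (j * (N - 1))" by (metis inverse_unique)
  have "inverse h = \<beta> ^ (j * (N - 1)) * emb (inverse b)"
    using h inv by (simp add: E.hom_inverse)
  moreover have "inverse b \<noteq> 0" using h by simp
  ultimately show ?thesis unfolding H_def by blast
qed

lemma W_count: "card {i. i < N \<and> (\<exists>b. b \<noteq> 0 \<and> \<beta> ^ i = emb b)} = G"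
proof -
  have "{i. i < N \<and> (\<exists>b. b \<noteq> 0 \<and> \<beta> ^ i = emb b)} = {i. i < N \<and> N dvd i * ((q - 1) * e)}"
  proof (intro Collect_cong conj_cong refl)
    fix i
    have "(\<exists>b. b \<noteq> 0 \<and> \<beta> ^ i = emb b) \<longleftrightarrow> (\<beta> ^ i) ^ (q - 1) = 1"
      using EFstar[of "\<beta> ^ i"] beta_nz by simp
    also have "(\<beta> ^ i) ^ (q - 1) = \<zeta> ^ (e * i * (q - 1))"
      unfolding \<beta>_def by (simp only: power_mult)
    also have "e * i * (q - 1) = i * ((q - 1) * e)" by (simp add: mult_ac)
    also have "\<zeta> ^ (i * ((q - 1) * e)) = 1 \<longleftrightarrow> N dvd i * ((q - 1) * e)"
      by (simp add: zpow_one_mod dvd_eq_mod_eq_0)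
    finally show "(\<exists>b. b \<noteq> 0 \<and> \<beta> ^ i = emb b) \<longleftrightarrow> N dvd i * ((q - 1) * e)" .
  qed
  thus ?thesis using count_dvd_mult[OF N_pos] unfolding G_def by simp
qed

definition "D = {..<N} \<times> {b :: 'a. b \<noteq> 0}"
definition "mu = (\<lambda>(j, b). \<beta> ^ j * emb b)"

lemma sigma_inj: "inj_on (\<lambda>i. (i + j0) mod N) {..<N}"
proof (rule inj_onI)
  fix i1 i2 assume "i1 \<in> {..<N}" "i2 \<in> {..<N}" "(i1 + j0) mod N = (i2 + j0) mod N"
  hence "[i1 = i2] (mod N)" "i1 < N" "i2 < N" by (auto simp: cong_def[symmetric] cong_add_rcancel_nat)
  thus "i1 = i2" by (simp add: cong_def)
qed

lemma fiber_card:
  assumes j0: "j0 < N" and b0: "b0 \<noteq> 0"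
  shows "card {x \<in> D. mu x = \<beta> ^ j0 * emb b0} = G"
proof -
  define y where "y = \<beta> ^ j0 * emb b0"
  define F where "F = {x \<in> D. mu x = y}"
  define W where "W = {i. i < N \<and> (\<exists>b. b \<noteq> 0 \<and> \<beta> ^ i = emb b)}"
  have Eb0: "emb b0 \<noteq> 0" using b0 by simp
  have sig: "\<beta> ^ ((i + j0) mod N) = \<beta> ^ i * \<beta> ^ j0" for i
    by (simp add: power_add flip: bpow_mod)
  have injF: "inj_on fst F"
  proof (rule inj_onI)
    fix x1 x2 assume x: "x1 \<in> F" "x2 \<in> F" "fst x1 = fst x2"
    obtain j1 c1 where x1: "x1 = (j1, c1)" by (cases x1)
    obtain j2 c2 where x2: "x2 = (j2, c2)" by (cases x2)
    have "\<beta> ^ j1 * emb c1 = \<beta> ^ j1 * emb c2" using x x1 x2 by (simp add: F_def mu_def)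
    hence "c1 = c2" using beta_nz by simp
    thus "x1 = x2" using x x1 x2 by simp
  qed
  have img: "fst ` F = (\<lambda>i. (i + j0) mod N) ` W"
  proof
    show "(\<lambda>i. (i + j0) mod N) ` W \<subseteq> fst ` F"
    proof
      fix j assume "j \<in> (\<lambda>i. (i + j0) mod N) ` W"
      then obtain i b1 where i: "j = (i + j0) mod N" "i < N" "b1 \<noteq> 0" "\<beta> ^ i = emb b1"
        unfolding W_def by blast
      have Eb1: "emb b1 \<noteq> 0" using i by simp
      have "mu (j, b0 / b1) = \<beta> ^ i * \<beta> ^ j0 * (emb b0 / emb b1)"
        unfolding mu_def using i sig by (simp add: E.hom_div)
      also have "\<dots> = y" unfolding y_def using i(4) Eb1 by (simp add: field_simps)
      finally have "mu (j, b0 / b1) = y" .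
      moreover have "(j, b0 / b1) \<in> D" unfolding D_def using i b0 N_pos by simp
      ultimately show "j \<in> fst ` F" unfolding F_def by (auto intro!: image_eqI[of _ _ "(j, b0 / b1)"])
    qed
    show "fst ` F \<subseteq> (\<lambda>i. (i + j0) mod N) ` W"
    proof
      fix j assume "j \<in> fst ` F"
      then obtain b where jb: "(j, b) \<in> D" "\<beta> ^ j * emb b = y" unfolding F_def mu_def by auto
      hence j: "j < N" "b \<noteq> 0" unfolding D_def by auto
      define i where "i = (j + (N - j0)) mod N"
      have "(i + j0) mod N = (j + (N - j0) + j0) mod N" unfolding i_def by (rule mod_add_left_eq)
      also have "j + (N - j0) + j0 = j + N" using j0 by simp
      finally have ij: "(i + j0) mod N = j" using j by simp
      have "\<beta> ^ i * \<beta> ^ j0 * emb b = \<beta> ^ j0 * emb b0" using sig[of i] ij jb unfolding y_def by simp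
      hence "\<beta> ^ i * emb b = emb b0" using beta_nz by (simp add: mult_ac)
      hence "\<beta> ^ i = emb (b0 / b)" using j by (simp add: E.hom_div field_simps)
      moreover have "b0 / b \<noteq> 0" using j b0 by simp
      moreover have "i < N" using N_pos by (simp add: i_def)
      ultimately have "i \<in> W" unfolding W_def by blast
      thus "j \<in> (\<lambda>i. (i + j0) mod N) ` W" using ij by force
    qed
  qed
  have "card F = card (fst ` F)" by (simp add: card_image[OF injF])
  also have "\<dots> = card W" unfolding img
    by (rule card_image) (rule inj_on_subset[OF sigma_inj], auto simp: W_def)
  also have "\<dots> = G" unfolding W_def by (rule W_count)
  finally show ?thesis unfolding F_def y_def .
qed

lemma H_img: "H = mu ` D"
proof
  show "H \<subseteq> mu ` D"
  proof
    fix h assume "h \<in> H"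
    then obtain j b where h: "h = \<beta> ^ j * emb b" "b \<noteq> 0" unfolding H_def by blast
    have "h = mu (j mod N, b)" unfolding mu_def h using bpow_mod by simp
    moreover have "(j mod N, b) \<in> D" unfolding D_def using h N_pos by simp
    ultimately show "h \<in> mu ` D" by blast
  qed
  show "mu ` D \<subseteq> H" unfolding D_def mu_def H_def by auto
qed

lemma card_H: "card H * G = N * (q - 1)"
proof -
  have fD: "finite D" unfolding D_def by simp
  have cD: "card D = N * (q - 1)"
  proof -
    have "{b :: 'a. b \<noteq> 0} = UNIV - {0}" by auto
    hence "card {b :: 'a. b \<noteq> 0} = q - 1" by (simp add: q_def card_Diff_singleton)
    thus ?thesis unfolding D_def by (simp add: card_cartesian_product)
  qed
  have DU: "D = (\<Union>y\<in>H. {x \<in> D. mu x = y})" unfolding H_img by auto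
  have "card D = card (\<Union>y\<in>H. {x \<in> D. mu x = y})" using DU by (rule arg_cong)
  also have "\<dots> = (\<Sum>y\<in>H. card {x \<in> D. mu x = y})"
    by (rule card_UN_disjoint) (auto simp: H_img fD)
  also have "\<dots> = (\<Sum>y\<in>H. G)"
  proof (rule sum.cong[OF refl])
    fix y assume "y \<in> H"
    then obtain j0 b0 where "(j0, b0) \<in> D" "y = mu (j0, b0)" unfolding H_img by auto
    thus "card {x \<in> D. mu x = y} = G" using fiber_card unfolding D_def mu_def by auto
  qed
  also have "\<dots> = card H * G" by simp
  finally show ?thesis using cD by simp
qed

lemma orbit_char: assumes c: "c \<in> Code"
  shows "rhoM_orbit n lam c = {d \<in> Code. \<exists>h\<in>H. psi d = h * psi c}"
proof
  show "rhoM_orbit n lam c \<subseteq> {d \<in> Code. \<exists>h\<in>H. psi d = h * psi c}"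
  proof
    fix d assume "d \<in> rhoM_orbit n lam c"
    then obtain j b where d: "d = (cshift n lam ^^ j) (smult b c)" "b \<noteq> 0"
      unfolding rhoM_orbit_def by blast
    have sc: "smult b c \<in> Code" using Code_smult[OF c] .
    have "d \<in> Code" "psi d = \<beta> ^ j * (emb b * psi c)"
      using iter_shift[OF sc, of j] d by (auto simp: psi_smult)
    moreover have "\<beta> ^ j * emb b \<in> H" using d unfolding H_def by blast
    ultimately show "d \<in> {d \<in> Code. \<exists>h\<in>H. psi d = h * psi c}" by (auto simp: mult.assoc)
  qed
  show "{d \<in> Code. \<exists>h\<in>H. psi d = h * psi c} \<subseteq> rhoM_orbit n lam c"
  proof
    fix d assume "d \<in> {d \<in> Code. \<exists>h\<in>H. psi d = h * psi c}"
    then obtain h where d: "d \<in> Code" "h \<in> H" "psi d = h * psi c" by blast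
    then obtain j b where h: "h = \<beta> ^ j * emb b" "b \<noteq> 0" unfolding H_def by blast
    define d' where "d' = (cshift n lam ^^ j) (smult b c)"
    have sc: "smult b c \<in> Code" using Code_smult[OF c] .
    have "d' \<in> Code" "psi d' = \<beta> ^ j * (emb b * psi c)"
      using iter_shift[OF sc, of j] unfolding d'_def by (auto simp: psi_smult)
    hence "d = d'" using psi_inj[OF d(1)] d(3) h by (simp add: mult.assoc)
    thus "d \<in> rhoM_orbit n lam c" unfolding rhoM_orbit_def d'_def using h by blast
  qed
qed

lemma H_witness: assumes c: "c \<in> Code" and h: "h \<in> H" shows "\<exists>d\<in>rhoM_orbit n lam c. psi d = h * psi c"
proof -
  obtain j b where hb: "h = \<beta> ^ j * emb b" "b \<noteq> 0" using h unfolding H_def by blast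
  define d where "d = (cshift n lam ^^ j) (smult b c)"
  have sc: "smult b c \<in> Code" using Code_smult[OF c] .
  have "psi d = \<beta> ^ j * (emb b * psi c)"
    using iter_shift[OF sc, of j] unfolding d_def by (auto simp: psi_smult)
  moreover have "d \<in> rhoM_orbit n lam c" unfolding rhoM_orbit_def d_def using hb by blast
  ultimately show ?thesis using hb by (auto simp: mult.assoc)
qed

lemma orbit_card: assumes c: "c \<in> Code" "c \<noteq> 0" shows "card (rhoM_orbit n lam c) = card H"
proof -
  have y: "psi c \<noteq> 0" using psi_nz c by simp
  have img: "psi ` rhoM_orbit n lam c = (\<lambda>h. h * psi c) ` H"
  proof
    show "psi ` rhoM_orbit n lam c \<subseteq> (\<lambda>h. h * psi c) ` H" unfolding orbit_char[OF c(1)] by auto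
    show "(\<lambda>h. h * psi c) ` H \<subseteq> psi ` rhoM_orbit n lam c"
    proof
      fix x assume "x \<in> (\<lambda>h. h * psi c) ` H"
      then obtain h where h: "h \<in> H" "x = h * psi c" by blast
      then obtain d where "d \<in> rhoM_orbit n lam c" "psi d = h * psi c" using H_witness[OF c(1)] by blast
      thus "x \<in> psi ` rhoM_orbit n lam c" using h by force
    qed
  qed
  have inj: "inj_on psi (rhoM_orbit n lam c)"
    by (rule inj_onI) (use psi_inj in \<open>auto simp: orbit_char[OF c(1)]\<close>)
  have "card (rhoM_orbit n lam c) = card (psi ` rhoM_orbit n lam c)" by (simp add: card_image[OF inj])
  also have "\<dots> = card H" unfolding img using y by (simp add: card_image inj_on_def)
  finally show ?thesis .
qed

lemma orbit_self: "c \<in> rhoM_orbit n lam c"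
proof -
  have "c = (cshift n lam ^^ 0) (smult 1 c)" by simp
  thus ?thesis unfolding rhoM_orbit_def using one_neq_zero by blast
qed

lemma orbit_sub: assumes "c \<in> Code" "c \<noteq> 0" shows "rhoM_orbit n lam c \<subseteq> Code - {0}"
proof
  fix d assume "d \<in> rhoM_orbit n lam c"
  then obtain h where d: "d \<in> Code" "h \<in> H" "psi d = h * psi c" unfolding orbit_char[OF assms(1)] by blast
  have "psi d \<noteq> 0" using d H_nz psi_nz assms by simp
  thus "d \<in> Code - {0}" using d psi_zero by auto
qed

lemma orbit_mono: assumes "c1 \<in> Code" "c2 \<in> Code" "g \<in> H" "psi c2 = g * psi c1"
  shows "rhoM_orbit n lam c2 \<subseteq> rhoM_orbit n lam c1"
proof
  fix d assume "d \<in> rhoM_orbit n lam c2"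
  then obtain h where d: "d \<in> Code" "h \<in> H" "psi d = h * psi c2" unfolding orbit_char[OF assms(2)] by blast
  have "psi d = (h * g) * psi c1" using d assms by (simp add: mult.assoc)
  moreover have "h * g \<in> H" using H_mult d assms by blast
  ultimately show "d \<in> rhoM_orbit n lam c1" unfolding orbit_char[OF assms(1)] using d by blast
qed

lemma orbit_eq: assumes "c1 \<in> Code" "c2 \<in> Code" "rhoM_orbit n lam c1 \<inter> rhoM_orbit n lam c2 \<noteq> {}"
  shows "rhoM_orbit n lam c1 = rhoM_orbit n lam c2"
proof -
  obtain d where "d \<in> rhoM_orbit n lam c1" "d \<in> rhoM_orbit n lam c2" using assms(3) by blast
  then obtain h1 h2 where h: "h1 \<in> H" "psi d = h1 * psi c1" "h2 \<in> H" "psi d = h2 * psi c2"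
    unfolding orbit_char[OF assms(1)] orbit_char[OF assms(2)] by blast
  have n1: "h1 \<noteq> 0" "h2 \<noteq> 0" using h H_nz by auto
  have "psi c2 = inverse h2 * (h2 * psi c2)" using n1 by simp
  also have "\<dots> = (inverse h2 * h1) * psi c1" using h by (simp add: mult.assoc)
  finally have e1: "psi c2 = (inverse h2 * h1) * psi c1" .
  have "psi c1 = inverse h1 * (h1 * psi c1)" using n1 by simp
  also have "\<dots> = (inverse h1 * h2) * psi c2" using h by (simp add: mult.assoc)
  finally have e2: "psi c1 = (inverse h1 * h2) * psi c2" .
  note e1 e2
  moreover have g: "inverse h2 * h1 \<in> H" "inverse h1 * h2 \<in> H" using H_mult H_inv h by auto
  ultimately have s1: "rhoM_orbit n lam c2 \<subseteq> rhoM_orbit n lam c1"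
    and s2: "rhoM_orbit n lam c1 \<subseteq> rhoM_orbit n lam c2"
    using orbit_mono[OF assms(1,2) g(1)] orbit_mono[OF assms(2,1) g(2)] by auto
  show ?thesis using s1 s2 by (rule subset_antisym[rotated])
qed

lemma orbit_count: "card H * card (rhoM_orbit n lam ` (Code - {0})) = q ^ k - 1"
proof -
  define Y where "Y = Code - {0}"
  have U: "\<Union> (rhoM_orbit n lam ` Y) = Y"
  proof
    show "\<Union> (rhoM_orbit n lam ` Y) \<subseteq> Y"
    proof
      fix x assume "x \<in> \<Union> (rhoM_orbit n lam ` Y)"
      then obtain c where c: "c \<in> Y" "x \<in> rhoM_orbit n lam c" by blast
      have "rhoM_orbit n lam c \<subseteq> Code - {0}" using c(1) unfolding Y_def by (intro orbit_sub) auto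
      thus "x \<in> Y" using c(2) unfolding Y_def by blast
    qed
    show "Y \<subseteq> \<Union> (rhoM_orbit n lam ` Y)"
    proof
      fix x assume "x \<in> Y"
      thus "x \<in> \<Union> (rhoM_orbit n lam ` Y)" using orbit_self[of x] by blast
    qed
  qed
  have "card H * card (rhoM_orbit n lam ` Y) = card (\<Union> (rhoM_orbit n lam ` Y))"
  proof (rule card_partition)
    show "finite (rhoM_orbit n lam ` Y)" unfolding Y_def using finite_Code by simp
    show "finite (\<Union> (rhoM_orbit n lam ` Y))" unfolding U by (simp add: Y_def finite_Code)
    show "card c = card H" if cin: "c \<in> rhoM_orbit n lam ` Y" for c
    proof -
      obtain c0 where "c0 \<in> Y" "c = rhoM_orbit n lam c0" using cin by blast
      thus ?thesis using orbit_card[of c0] unfolding Y_def by simp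
    qed
    show "c1 \<inter> c2 = {}" if cc1: "c1 \<in> rhoM_orbit n lam ` Y" and cc2: "c2 \<in> rhoM_orbit n lam ` Y" and cne: "c1 \<noteq> c2" for c1 c2
    proof (rule ccontr)
      assume ne: "c1 \<inter> c2 \<noteq> {}"
      obtain a1 where a1: "a1 \<in> Y" "c1 = rhoM_orbit n lam a1" using cc1 by blast
      obtain a2 where a2: "a2 \<in> Y" "c2 = rhoM_orbit n lam a2" using cc2 by blast
      have "c1 = c2" unfolding a1(2) a2(2)
        by (rule orbit_eq) (use a1 a2 ne in \<open>auto simp: Y_def\<close>)
      thus False using cne by simp
    qed
  qed
  also have "\<dots> = q ^ k - 1" unfolding U using zero_in_Code finite_Code
    by (simp add: Y_def card_Diff_singleton card_Code)
  finally show ?thesis unfolding Y_def .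
qed

end



context cc
begin

lemma hw_smult: assumes "(b::'a) \<noteq> 0" shows "hweight (smult b c) = hweight c"
proof -
  have "{i. coeff (smult b c) i \<noteq> 0} = {i. coeff c i \<noteq> 0}" using assms by auto
  thus ?thesis unfolding hweight_def by simp
qed

lemma X_mult: "monom 1 1 * (c::'a poly) = pCons 0 c"
  by (rule poly_eqI) (simp add: coeff_monom_mult coeff_pCons split: nat.split)

lemma coeff_f: "coeff f i = (if i = n then 1 else 0) + (if i = 0 then - lam else 0)"
  unfolding f_alt by (simp add: coeff_monom coeff_pCons split: nat.split)

lemma hw_shift: assumes deg: "(c::'a poly) = 0 \<or> degree c < n" shows "hweight (cshift n lam c) = hweight c"
proof -
  define a where "a = coeff c (n - 1)"
  define d where "d = pCons 0 c - smult a f"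
  have cz: "coeff c i = 0" if "i \<ge> n" for i
    using deg that by (auto intro: coeff_eq_0)
  have cd: "coeff d i = (if i = 0 then a * lam else if i < n then coeff c (i - 1) else 0)" for i
  proof -
    have "coeff d i = coeff (pCons 0 c) i - a * coeff f i" by (simp add: d_def)
    also have "\<dots> = (if i = 0 then a * lam else if i < n then coeff c (i - 1) else 0)"
    proof (cases i)
      case 0 then show ?thesis using n_pos by (simp add: coeff_f)
    next
      case (Suc i')
      have "coeff (pCons 0 c) i = coeff c i'" using Suc by simp
      moreover have "coeff f i = (if i = n then 1 else 0)" using Suc by (simp add: coeff_f)
      ultimately show ?thesis using Suc cz[of i'] by (auto simp: a_def)
    qed
    finally show ?thesis .
  qed
  have degd: "degree d < n"
  proof -
    have "degree d \<le> n - 1" by (rule degree_le) (auto simp: cd)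
    thus ?thesis using n_pos by simp
  qed
  have "cshift n lam c = pCons 0 c mod f" unfolding cshift_alt X_mult ..
  also have "pCons 0 c = d + f * [:a:]" by (simp add: d_def)
  also have "(d + f * [:a:]) mod f = d mod f" by (rule mod_mult_self2)
  also have "d mod f = d" using degd degree_f by (simp add: mod_poly_less)
  finally have sh: "cshift n lam c = d" .
  have suppc: "{i. coeff c i \<noteq> 0} \<subseteq> {..<n}" using cz by (auto simp: not_less[symmetric])
  have inj: "inj_on (\<lambda>i. Suc i mod n) {..<n}"
  proof (rule inj_onI)
    fix i j assume ij: "i \<in> {..<n}" "j \<in> {..<n}" "Suc i mod n = Suc j mod n"
    hence "[1 + i = 1 + j] (mod n)" by (simp add: cong_def)
    hence "[i = j] (mod n)" by (simp only: cong_add_lcancel_nat)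
    thus "i = j" using ij by (simp add: cong_def)
  qed
  have supp: "{i. coeff d i \<noteq> 0} = (\<lambda>i. Suc i mod n) ` {i. coeff c i \<noteq> 0}"
  proof
    show "(\<lambda>i. Suc i mod n) ` {i. coeff c i \<noteq> 0} \<subseteq> {i. coeff d i \<noteq> 0}"
    proof
      fix x assume "x \<in> (\<lambda>i. Suc i mod n) ` {i. coeff c i \<noteq> 0}"
      then obtain i where i: "x = Suc i mod n" "coeff c i \<noteq> 0" by blast
      have iln: "i < n" using i(2) cz by (meson not_less)
      show "x \<in> {i. coeff d i \<noteq> 0}"
      proof (cases "Suc i < n")
        case True
        thus ?thesis using i by (simp add: cd)
      next
        case False
        hence "Suc i = n" using iln by simp
        hence "x = 0" "i = n - 1" using i by auto
        thus ?thesis using i(2) lam_nz by (simp add: cd a_def)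
      qed
    qed
    show "{i. coeff d i \<noteq> 0} \<subseteq> (\<lambda>i. Suc i mod n) ` {i. coeff c i \<noteq> 0}"
    proof
      fix x assume "x \<in> {i. coeff d i \<noteq> 0}"
      hence x: "coeff d x \<noteq> 0" by simp
      show "x \<in> (\<lambda>i. Suc i mod n) ` {i. coeff c i \<noteq> 0}"
      proof (cases "x = 0")
        case True
        hence "a \<noteq> 0" using x by (simp add: cd)
        moreover have "Suc (n - 1) mod n = x" using True n_pos by simp
        ultimately show ?thesis unfolding a_def by (intro image_eqI[of _ _ "n - 1"]) auto
      next
        case False
        hence xn: "x < n" "coeff c (x - 1) \<noteq> 0" using x by (auto simp: cd split: if_splits)
        moreover have "Suc (x - 1) mod n = x" using False xn by simp
        ultimately show ?thesis by (intro image_eqI[of _ _ "x - 1"]) auto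
      qed
    qed
  qed
  have "hweight (cshift n lam c) = card ((\<lambda>i. Suc i mod n) ` {i. coeff c i \<noteq> 0})"
    unfolding sh hweight_def supp ..
  also have "\<dots> = card {i. coeff c i \<noteq> 0}"
    by (rule card_image) (rule inj_on_subset[OF inj suppc])
  finally show ?thesis unfolding hweight_def .
qed

lemma hw_orbit: assumes c: "c \<in> Code" and d: "d \<in> rhoM_orbit n lam c" shows "hweight d = hweight c"
proof -
  obtain j b where db: "d = (cshift n lam ^^ j) (smult b c)" "b \<noteq> 0"
    using d unfolding rhoM_orbit_def by blast
  have sc: "smult b c \<in> Code" using Code_smult[OF c] .
  have "hweight ((cshift n lam ^^ j) (smult b c)) = hweight (smult b c)"
  proof (induction j)
    case 0 then show ?case by simp
  next
    case (Suc j)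
    have "(cshift n lam ^^ j) (smult b c) \<in> Code" using iter_shift[OF sc] by blast
    hence "hweight (cshift n lam ((cshift n lam ^^ j) (smult b c))) = hweight ((cshift n lam ^^ j) (smult b c))"
      using Code_deg hw_shift by blast
    thus ?case using Suc by simp
  qed
  thus ?thesis using db hw_smult by simp
qed

lemma final:
  "real (num_orbits n lam (Code - {0})) = real ((q ^ k - 1) * G) / real ((q - 1) * t * n)
   \<and> card (hweight ` (Code - {0})) \<le> num_orbits n lam (Code - {0})
   \<and> (card (hweight ` (Code - {0})) = num_orbits n lam (Code - {0}) \<longleftrightarrow>
        (\<forall>c1\<in>Code - {0}. \<forall>c2\<in>Code - {0}. hweight c1 = hweight c2 \<longrightarrow>
           (\<exists>j b. b \<noteq> 0 \<and> (cshift n lam ^^ j) (smult b c1) = c2)))"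
proof -
  define Y where "Y = Code - {0}"
  define Orb where "Orb = rhoM_orbit n lam ` Y"
  have no: "num_orbits n lam Y = card Orb" unfolding num_orbits_def Orb_def ..
  have fOrb: "finite Orb" unfolding Orb_def Y_def using finite_Code by simp
  have c1: "card H * card Orb = q ^ k - 1" using orbit_count unfolding Orb_def Y_def .
  have "card Orb * (N * (q - 1)) = card Orb * (card H * G)" using card_H by simp
  also have "\<dots> = (q ^ k - 1) * G" using c1 by (simp add: mult_ac)
  finally have nat_eq: "card Orb * ((q - 1) * t * n) = (q ^ k - 1) * G" by (simp add: N_def mult_ac)
  have pos: "(q - 1) * t * n \<noteq> 0" using q_ge2 t_pos n_pos by simp
  have p1: "real (card Orb) = real ((q ^ k - 1) * G) / real ((q - 1) * t * n)"
  proof -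
    have "real (card Orb) * real ((q - 1) * t * n) = real ((q ^ k - 1) * G)"
      using nat_eq by (metis of_nat_mult)
    thus ?thesis using pos by (simp add: eq_divide_eq)
  qed
  define W where "W = (\<lambda>S::'a poly set. hweight (SOME d. d \<in> S))"
  have Wc: "W (rhoM_orbit n lam c) = hweight c" if "c \<in> Code" for c
  proof -
    have "(SOME d. d \<in> rhoM_orbit n lam c) \<in> rhoM_orbit n lam c"
      using orbit_self by (rule someI)
    thus ?thesis unfolding W_def using hw_orbit[OF that] by blast
  qed
  have himg: "hweight ` Y = W ` Orb"
    unfolding Orb_def image_image using Wc unfolding Y_def by (intro image_cong) auto
  have p2: "card (hweight ` Y) \<le> card Orb" unfolding himg using fOrb by (rule card_image_le)
  have "card (hweight ` Y) = card Orb \<longleftrightarrow> inj_on W Orb"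
    unfolding himg using inj_on_iff_eq_card[OF fOrb, of W] by (rule sym)
  also have "inj_on W Orb \<longleftrightarrow> (\<forall>c1\<in>Y. \<forall>c2\<in>Y. hweight c1 = hweight c2 \<longrightarrow>
           (\<exists>j b. b \<noteq> 0 \<and> (cshift n lam ^^ j) (smult b c1) = c2))"
  proof
    assume inj: "inj_on W Orb"
    show "\<forall>c1\<in>Y. \<forall>c2\<in>Y. hweight c1 = hweight c2 \<longrightarrow>
           (\<exists>j b. b \<noteq> 0 \<and> (cshift n lam ^^ j) (smult b c1) = c2)"
    proof (intro ballI impI)
      fix c1 c2 assume c: "c1 \<in> Y" "c2 \<in> Y" "hweight c1 = hweight c2"
      have "W (rhoM_orbit n lam c1) = W (rhoM_orbit n lam c2)" using c Wc unfolding Y_def by simp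
      moreover have "rhoM_orbit n lam c1 \<in> Orb" "rhoM_orbit n lam c2 \<in> Orb" using c unfolding Orb_def by auto
      ultimately have "rhoM_orbit n lam c1 = rhoM_orbit n lam c2" using inj by (simp add: inj_on_def)
      hence "c2 \<in> rhoM_orbit n lam c1" using orbit_self by simp
      thus "\<exists>j b. b \<noteq> 0 \<and> (cshift n lam ^^ j) (smult b c1) = c2" unfolding rhoM_orbit_def by blast
    qed
  next
    assume R: "\<forall>c1\<in>Y. \<forall>c2\<in>Y. hweight c1 = hweight c2 \<longrightarrow>
           (\<exists>j b. b \<noteq> 0 \<and> (cshift n lam ^^ j) (smult b c1) = c2)"
    show "inj_on W Orb"
    proof (rule inj_onI)
      fix O1 O2 assume OO: "O1 \<in> Orb" "O2 \<in> Orb" "W O1 = W O2"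
      obtain c1 where c1: "c1 \<in> Y" "O1 = rhoM_orbit n lam c1" using OO(1) unfolding Orb_def by blast
      obtain c2 where c2: "c2 \<in> Y" "O2 = rhoM_orbit n lam c2" using OO(2) unfolding Orb_def by blast
      have "hweight c1 = hweight c2" using OO(3) c1 c2 Wc unfolding Y_def by simp
      then obtain j b where "b \<noteq> 0" "(cshift n lam ^^ j) (smult b c1) = c2" using R c1 c2 by blast
      hence "c2 \<in> rhoM_orbit n lam c1" unfolding rhoM_orbit_def by blast
      hence "rhoM_orbit n lam c1 \<inter> rhoM_orbit n lam c2 \<noteq> {}" using orbit_self[of c2] by blast
      hence "rhoM_orbit n lam c1 = rhoM_orbit n lam c2"
        using c1 c2 unfolding Y_def by (intro orbit_eq) auto
      thus "O1 = O2" using c1 c2 by simp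
    qed
  qed
  finally have p3: "card (hweight ` Y) = card Orb \<longleftrightarrow> (\<forall>c1\<in>Y. \<forall>c2\<in>Y. hweight c1 = hweight c2 \<longrightarrow>
           (\<exists>j b. b \<noteq> 0 \<and> (cshift n lam ^^ j) (smult b c1) = c2))" .
  show ?thesis using p1 p2 p3 no unfolding Y_def Orb_def by simp
qed

end

theorem lemma5:
  fixes emb :: "'a::{finite,field} \<Rightarrow> 'b::{finite,field}"
    and n t \<alpha> :: nat and lam :: 'a and \<zeta> :: 'b
  defines "q \<equiv> card (UNIV :: 'a set)"
  defines "Cset \<equiv> cyc_coset q (t * n) (1 + t * \<alpha>)"
  defines "k \<equiv> card Cset"
  defines "Code \<equiv> irr_code emb n lam \<zeta> Cset"
  assumes n_pos: "n > 0" and cop: "coprime n q"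
    and lam_nz: "lam \<noteq> 0"
    and t_pos: "t > 0" and lam_t: "lam ^ t = 1"
    and t_ord: "\<forall>j. 0 < j \<and> j < t \<longrightarrow> lam ^ j \<noteq> 1"
    and emb_inj: "inj emb"
    and emb_add: "\<forall>x y. emb (x + y) = emb x + emb y"
    and emb_mult: "\<forall>x y. emb (x * y) = emb x * emb y"
    and emb_one: "emb 1 = 1"
    and zeta_tn: "\<zeta> ^ (t * n) = 1"
    and zeta_ord: "\<forall>j. 0 < j \<and> j < t * n \<longrightarrow> \<zeta> ^ j \<noteq> 1"
    and zeta_n: "\<zeta> ^ n = emb lam"
    and alpha_lt: "\<alpha> < n"
  shows "real (num_orbits n lam (Code - {0})) =
           real ((q ^ k - 1) * gcd ((q - 1) * (1 + t * \<alpha>)) (t * n)) / real ((q - 1) * t * n)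
       \<and> card (hweight ` (Code - {0})) \<le> num_orbits n lam (Code - {0})
       \<and> (card (hweight ` (Code - {0})) = num_orbits n lam (Code - {0}) \<longleftrightarrow>
            (\<forall>c1\<in>Code - {0}. \<forall>c2\<in>Code - {0}. hweight c1 = hweight c2 \<longrightarrow>
               (\<exists>j b. b \<noteq> 0 \<and> (cshift n lam ^^ j) (smult b c1) = c2)))"
  proof -
  interpret C: cc emb n t \<alpha> lam \<zeta>
    by unfold_locales (use n_pos cop lam_nz t_pos lam_t t_ord emb_inj emb_add emb_mult emb_one
        zeta_tn zeta_ord zeta_n alpha_lt in \<open>simp_all add: q_def\<close>)
  have qq: "C.q = q" by (simp add: C.q_def q_def)
  have CC: "C.Cs = Cset" by (simp add: C.Cs_def Cset_def C.q_def q_def C.N_def C.e_def)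
  have kk: "C.k = k" by (simp add: C.k_def k_def CC)
  have Co: "C.Code = Code" by (simp add: C.Code_def Code_def CC)
  have GG: "C.G = gcd ((q - 1) * (1 + t * \<alpha>)) (t * n)" by (simp add: C.G_def C.e_def C.N_def qq)
  show ?thesis using C.final unfolding Co kk qq GG .
qed

end
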